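(* Let $a,b\in\mathcal{A}$ be distinct with $p_a>0$ and $p_b>0$, and let $S$ be a scoring function. Assume there exist constants $\Delta>0$ and $\alpha>0$ such that for all $n$ large enough $$P\left(E[\tilde{L}_n(S)-L_n(S)\mid X,Y]\geq\Delta\right)\geq 1-n^{-\alpha\ln(n)}.$$ Then $\mathrm{VAR}[L_n(S)]=\Theta(n)$, i.e. there are constants $0<c\le C$ with $cn\le \mathrm{VAR}[L_n(S)]\le Cn$ for all $n$ large enough.
   Context: Let $\mathcal{A}$ be a finite alphabet and $\mathcal{A}^*=\mathcal{A}\cup\{G\}$, where $G$ is a gap symbol. A scoring function is a symmetric map $S:\mathcal{A}^*\times\mathcal{A}^*\to\mathbb{R}$. For strings $x=x_1\dots x_m$, $y=y_1\dots y_{m'}$ over $\mathcal{A}$, an alignment $\pi$ is a sequence $((\mu_1,\nu_1),\dots,(\mu_k,\nu_k))$, $k\ge0$, with $1\le\mu_1<\dots<\mu_k\le m$ and $1\le\nu_1<\dots<\nu_k\le m'$; its score is $S_\pi(x,y)=\sum_{i=1}^k S(x_{\mu_i},y_{\nu_i})+\sum_{j\notin\{\mu_i\}}S(x_j,G)+\sum_{j\notin\{\nu_i\}}S(G,y_j)$, and $L_S(x,y)=\max_\pi S_\pi(x,y)$. Let $X=X_1\dots X_n$, $Y=Y_1\dots Y_n$ where all $2n$ letters are i.i.d. with $P(X_i=c)=P(Y_j=c)=p_c$. Put $L_n(S)=L_S(X,Y)$. For fixed distinct $a,b$, let $N_a$ be the total number of occurrences of $a$ in $X$ and $Y$ combined;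 if $N_a\ge1$, choose one of these occurrences uniformly at random and replace it by $b$, giving $(\tilde X,\tilde Y)$ (if $N_a=0$ set $(\tilde X,\tilde Y)=(X,Y)$), and let $\tilde L_n(S)=L_S(\tilde X,\tilde Y)$. *)

theory Defs
  imports "HOL-Probability.Probability"
begin

text \<open>Alphabet: a finite type 'a. The extended alphabet with the gap symbol G is
 'a option, where None plays the role of G and Some c the letter c.\<close>

definition symmetric_score :: "('a option \<Rightarrow> 'a option \<Rightarrow> real) \<Rightarrow> bool" where
  "symmetric_score S \<longleftrightarrow> (\<forall>u v. S u v = S v u)"

definition alignments :: "nat \<Rightarrow> nat \<Rightarrow> (nat \<times> nat) list set" where
  "alignments m m' = {\<pi>. sorted_wrt (\<lambda>(i,j) (k,l). i < k \<and> j < l) \<pi> \<and>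
                         (\<forall>(i,j)\<in>set \<pi>. i < m \<and> j < m')}"

definition align_score ::
  "('a option \<Rightarrow> 'a option \<Rightarrow> real) \<Rightarrow> 'a list \<Rightarrow> 'a list \<Rightarrow> (nat \<times> nat) list \<Rightarrow> real" where
  "align_score S x y \<pi> =
     (\<Sum>(i,j)\<leftarrow>\<pi>. S (Some (x!i)) (Some (y!j)))
   + (\<Sum>i\<in>{..<length x} - fst ` set \<pi>. S (Some (x!i)) None)
   + (\<Sum>j\<in>{..<length y} - snd ` set \<pi>. S None (Some (y!j)))"

definition opt_score :: "('a option \<Rightarrow> 'a option \<Rightarrow> real) \<Rightarrow> 'a list \<Rightarrow> 'a list \<Rightarrow> real" where
  "opt_score S x y = Max (align_score S x y ` alignments (length x) (length y))"

fun word_pmf :: "'a pmf \<Rightarrow> nat \<Rightarrow> 'a list pmf" where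
  "word_pmf D 0 = return_pmf []"
| "word_pmf D (Suc n) = bind_pmf D (\<lambda>c. map_pmf (Cons c) (word_pmf D n))"

definition XY_pmf :: "'a pmf \<Rightarrow> nat \<Rightarrow> ('a list \<times> 'a list) pmf" where
  "XY_pmf D n = pair_pmf (word_pmf D n) (word_pmf D n)"

definition occurrences :: "'a \<Rightarrow> 'a list \<Rightarrow> 'a list \<Rightarrow> (nat + nat) set" where
  "occurrences a x y = Inl ` {i. i < length x \<and> x!i = a} \<union> Inr ` {j. j < length y \<and> y!j = a}"

definition replace_at :: "'a \<Rightarrow> 'a list \<Rightarrow> 'a list \<Rightarrow> nat + nat \<Rightarrow> 'a list \<times> 'a list" where
  "replace_at b x y k = (case k of Inl i \<Rightarrow> (x[i := b], y) | Inr j \<Rightarrow> (x, y[j := b]))"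

text \<open>Conditional distribution of (X~,Y~) given (X,Y)=(x,y).\<close>
definition perturb_pmf :: "'a \<Rightarrow> 'a \<Rightarrow> 'a list \<Rightarrow> 'a list \<Rightarrow> ('a list \<times> 'a list) pmf" where
  "perturb_pmf a b x y =
     (if occurrences a x y = {} then return_pmf (x, y)
      else map_pmf (replace_at b x y) (pmf_of_set (occurrences a x y)))"

text \<open>E[L~_n(S) - L_n(S) | X = x, Y = y].\<close>
definition cond_increment ::
  "('a option \<Rightarrow> 'a option \<Rightarrow> real) \<Rightarrow> 'a \<Rightarrow> 'a \<Rightarrow> 'a list \<Rightarrow> 'a list \<Rightarrow> real" where
  "cond_increment S a b x y =
     measure_pmf.expectation (perturb_pmf a b x y) (\<lambda>(x', y'). opt_score S x' y' - opt_score S x y)"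

end

theory Submission
  imports Defs
begin


definition LL :: "nat \<Rightarrow> 'a list set" where "LL n = {xs. length xs = n}"
definition wt :: "'a pmf \<Rightarrow> 'a list \<Rightarrow> real" where "wt D xs = prod_list (map (pmf D) xs)"

lemma finite_LL: "finite (LL n :: 'a::finite list set)"
  using finite_lists_length_eq[of "UNIV::'a set" n] by (simp add: LL_def)

lemma pmf_word: "pmf (word_pmf D n) xs = (if length xs = n then wt D xs else 0)"
proof (induction n arbitrary: xs)
  case 0
  then show ?case by (auto simp: wt_def pmf_return)
next
  case (Suc n)
  show ?case
  proof (cases xs)
    case Nil
    have "pmf (word_pmf D (Suc n)) [] = 0"
      by (auto simp: pmf_eq_0_set_pmf)
    then show ?thesis using Nil by simp
  next
    case (Cons d ys)
    have "pmf (map_pmf (Cons c) (word_pmf D n)) (d # ys) = (if c = d then pmf (word_pmf D n) ys else 0)" for c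
    proof (cases "c = d")
      case True then show ?thesis using pmf_map_inj'[of "Cons c" "word_pmf D n" ys] by (simp add: inj_def)
    next
      case False then show ?thesis by (auto simp: pmf_eq_0_set_pmf)
    qed
    then have "pmf (word_pmf D (Suc n)) xs = (\<integral>c. (if c = d then pmf (word_pmf D n) ys else 0) \<partial>measure_pmf D)"
      using Cons by (simp add: pmf_bind)
    also have "\<dots> = (\<integral>c. indicator {d} c * pmf (word_pmf D n) ys \<partial>measure_pmf D)"
      by (intro Bochner_Integration.integral_cong) (auto simp: indicator_def)
    also have "\<dots> = pmf D d * pmf (word_pmf D n) ys"
      by (simp add: measure_pmf_single)
    finally show ?thesis using Suc Cons by (simp add: wt_def)
  qed
qed

lemma exp_XY:
  fixes D :: "'a::finite pmf"
  shows "measure_pmf.expectation (XY_pmf D n) g =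
     (\<Sum>z\<in>LL n \<times> LL n. wt D (fst z) * wt D (snd z) * g z)"
proof -
  have "measure_pmf.expectation (XY_pmf D n) g = (\<Sum>z\<in>(LL n :: 'a list set) \<times> (LL n :: 'a list set). g z * pmf (XY_pmf D n) z)"
  proof (rule integral_measure_pmf_real)
    show "finite ((LL n :: 'a list set) \<times> (LL n :: 'a list set))" by (simp add: finite_LL)
    fix z assume "z \<in> set_pmf (XY_pmf D n)"
    then show "z \<in> LL n \<times> LL n"
      by (cases z) (auto simp: XY_pmf_def set_pmf_iff pmf_pair pmf_word LL_def split: if_splits)
  qed
  also have "\<dots> = (\<Sum>z\<in>LL n \<times> LL n. wt D (fst z) * wt D (snd z) * g z)"
    by (intro sum.cong refl) (auto simp: XY_pmf_def pmf_pair pmf_word LL_def)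
  finally show ?thesis .
qed

lemma wt_Cons[simp]: "wt D (c # xs) = pmf D c * wt D xs"
  by (simp add: wt_def)

lemma wt_Nil[simp]: "wt D [] = 1"
  by (simp add: wt_def)

lemma wt_append: "wt D (xs @ ys) = wt D xs * wt D ys"
  by (simp add: wt_def)

lemma wt_nonneg: "wt D xs \<ge> 0"
  by (induction xs) auto

lemma sum_LL_Suc:
  "(\<Sum>x\<in>LL (Suc n). h x) = (\<Sum>c\<in>(UNIV::'a::finite set). \<Sum>z\<in>LL n. h (c # z))"
proof -
  have eq: "LL (Suc n) = (\<lambda>(c,z). c # z) ` (UNIV \<times> LL n)"
    by (auto simp: LL_def length_Suc_conv image_iff)
  have inj: "inj_on (\<lambda>(c,z). c # z) (UNIV \<times> (LL n :: 'a list set))"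
    by (auto simp: inj_on_def)
  have "(\<Sum>x\<in>LL (Suc n). h x) = (\<Sum>p\<in>UNIV \<times> LL n. h (fst p # snd p))"
    by (subst eq, subst sum.reindex[OF inj]) (simp add: split_beta)
  also have "\<dots> = (\<Sum>c\<in>UNIV. \<Sum>z\<in>LL n. h (c # z))"
    by (simp add: sum.cartesian_product split_beta)
  finally show ?thesis .
qed

lemma sum_pmf_UNIV: "(\<Sum>c\<in>(UNIV::'a::finite set). pmf D c) = 1"
  by (rule sum_pmf_eq_1) auto

lemma sum_wt: "(\<Sum>x\<in>LL n. wt D x) = (1::real)" for D :: "'a::finite pmf"
proof (induction n)
  case 0
  have "LL 0 = {[] :: 'a list}" by (auto simp: LL_def)
  then show ?case by simp
next
  case (Suc n)
  have "(\<Sum>x\<in>LL (Suc n). wt D x) = (\<Sum>c\<in>UNIV. pmf D c * (\<Sum>z\<in>LL n. wt D z))"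
    by (simp add: sum_LL_Suc sum_distrib_left)
  then show ?case using Suc by (simp add: sum_pmf_UNIV)
qed

lemma marginal:
  fixes D :: "'a::finite pmf"
  shows "i < n \<Longrightarrow> (\<Sum>x\<in>LL n. if x ! i = c then wt D x else 0) = pmf D c"
proof (induction n arbitrary: i)
  case 0 then show ?case by simp
next
  case (Suc n)
  show ?case
  proof (cases i)
    case 0
    have "(\<Sum>x\<in>LL (Suc n). if x ! i = c then wt D x else 0)
        = (\<Sum>d\<in>UNIV. \<Sum>z\<in>LL n. if d = c then wt D (d # z) else 0)"
      using 0 by (simp add: sum_LL_Suc)
    also have "\<dots> = (\<Sum>d\<in>UNIV. if d = c then pmf D d * (\<Sum>z\<in>LL n. wt D z) else 0)"
      by (intro sum.cong refl) (simp add: sum_distrib_left)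
    also have "\<dots> = pmf D c" by (simp add: sum_wt)
    finally show ?thesis .
  next
    case (Suc j)
    have "(\<Sum>x\<in>LL (Suc n). if x ! i = c then wt D x else 0)
        = (\<Sum>d\<in>UNIV. pmf D d * (\<Sum>z\<in>LL n. if z ! j = c then wt D z else 0))"
      using Suc by (simp add: sum_LL_Suc sum_distrib_left if_distrib cong: if_cong)
    also have "\<dots> = pmf D c" using Suc.IH[of j] Suc.prems Suc by (simp add: sum_pmf_UNIV flip: sum_distrib_right)
    finally show ?thesis .
  qed
qed

lemma wt_update:
  "i < length xs \<Longrightarrow> wt D (xs[i := v]) * pmf D (xs ! i) = wt D xs * pmf D v"
proof (induction xs arbitrary: i)
  case Nil then show ?case by simp
next
  case (Cons x xs)
  then show ?case by (cases i) (auto simp: mult_ac)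
qed

lemma exchange1:
  fixes D :: "'a::finite pmf"
  assumes "i < n" "a \<noteq> b" "pmf D b > 0"
  shows "(\<Sum>x\<in>LL n. if x ! i = a then wt D x * G (x[i := b]) else 0)
       = (pmf D a / pmf D b) * (\<Sum>x\<in>LL n. if x ! i = b then wt D x * G x else 0)"
proof -
  let ?A = "{x\<in>LL n. x ! i = a}" and ?B = "{x\<in>LL n. x ! i = b}"
  have "(\<Sum>x\<in>LL n. if x ! i = a then wt D x * G (x[i := b]) else 0) = (\<Sum>x\<in>?A. wt D x * G (x[i := b]))"
    by (simp add: sum.If_cases finite_LL Int_def conj_commute)
  also have "\<dots> = (\<Sum>y\<in>?B. (pmf D a / pmf D b) * (wt D y * G y))"
  proof (rule sum.reindex_bij_witness[of _ "\<lambda>y. y[i := a]" "\<lambda>x. x[i := b]"])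
    fix x assume x: "x \<in> ?A"
    then have len: "i < length x" using assms by (auto simp: LL_def)
    have "wt D (x[i := b]) * pmf D a = wt D x * pmf D b"
      using wt_update[OF len, of D b] x by simp
    then show "pmf D a / pmf D b * (wt D (x[i := b]) * G (x[i := b])) = wt D x * G (x[i := b])"
      using assms(3) by (simp add: field_simps)
  qed (use assms in \<open>auto simp: LL_def\<close>)
  also have "\<dots> = (pmf D a / pmf D b) * (\<Sum>y\<in>?B. wt D y * G y)"
    by (rule sum_distrib_left[symmetric])
  also have "(\<Sum>y\<in>?B. wt D y * G y) = (\<Sum>x\<in>LL n. if x ! i = b then wt D x * G x else 0)"
    by (simp add: sum.If_cases finite_LL Int_def conj_commute)
  finally show ?thesis .
qed

definition EE :: "'a pmf \<Rightarrow> nat \<Rightarrow> ('a list \<times> 'a list \<Rightarrow> real) \<Rightarrow> real" where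
  "EE D n h = (\<Sum>z\<in>LL n \<times> LL n. wt D (fst z) * wt D (snd z) * h z)"

lemma EE_cong: "(\<And>z. z \<in> LL n \<times> LL n \<Longrightarrow> f z = g z) \<Longrightarrow> EE D n f = EE D n g"
  unfolding EE_def by (intro sum.cong) auto

lemma EE_add: "EE D n (\<lambda>z. f z + g z) = EE D n f + EE D n g"
  unfolding EE_def by (simp add: distrib_left sum.distrib)

lemma EE_diff: "EE D n (\<lambda>z. f z - g z) = EE D n f - EE D n g"
  unfolding EE_def by (simp add: right_diff_distrib sum_subtractf)

lemma EE_cmult: "EE D n (\<lambda>z. c * f z) = c * EE D n f"
  unfolding EE_def by (simp add: sum_distrib_left mult_ac)

lemma EE_sum: "EE D n (\<lambda>z. \<Sum>i\<in>I. F i z) = (\<Sum>i\<in>I. EE D n (F i))"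
  unfolding EE_def by (simp add: sum_distrib_left sum.swap[of _ I])

lemma EE_split: "EE D n h = (\<Sum>x\<in>LL n. \<Sum>y\<in>LL n. wt D x * wt D y * h (x, y))"
  unfolding EE_def by (simp add: sum.cartesian_product split_beta)

lemma EE_mono: "(\<And>z. z \<in> LL n \<times> LL n \<Longrightarrow> f z \<le> g z) \<Longrightarrow> EE D n f \<le> EE D n g"
  unfolding EE_def by (intro sum_mono mult_left_mono) (auto simp: wt_nonneg)

lemma EE_const: "EE D n (\<lambda>z. c) = c" for D :: "'a::finite pmf"
  unfolding EE_split by (simp add: sum_distrib_left[symmetric] sum_distrib_right[symmetric] sum_wt mult_ac)

lemma exch_x:
  fixes D :: "'a::finite pmf"
  assumes "i < n" "a \<noteq> b" "pmf D b > 0"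
  shows "EE D n (\<lambda>z. if fst z ! i = a then g ((fst z)[i := b], snd z) else 0)
       = (pmf D a / pmf D b) * EE D n (\<lambda>z. if fst z ! i = b then g z else 0)"
proof -
  define G where "G x = (\<Sum>y\<in>LL n. wt D y * g (x, y))" for x
  have "EE D n (\<lambda>z. if fst z ! i = a then g ((fst z)[i := b], snd z) else 0)
      = (\<Sum>x\<in>LL n. if x ! i = a then wt D x * G (x[i := b]) else 0)"
    unfolding EE_split G_def by (intro sum.cong refl) (auto simp: sum_distrib_left mult_ac)
  also have "\<dots> = (pmf D a / pmf D b) * (\<Sum>x\<in>LL n. if x ! i = b then wt D x * G x else 0)"
    by (rule exchange1[OF assms])
  also have "(\<Sum>x\<in>LL n. if x ! i = b then wt D x * G x else 0) = EE D n (\<lambda>z. if fst z ! i = b then g z else 0)"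
    unfolding EE_split G_def by (intro sum.cong refl) (auto simp: sum_distrib_left mult_ac)
  finally show ?thesis .
qed

lemma exch_y:
  fixes D :: "'a::finite pmf"
  assumes "i < n" "a \<noteq> b" "pmf D b > 0"
  shows "EE D n (\<lambda>z. if snd z ! i = a then g (fst z, (snd z)[i := b]) else 0)
       = (pmf D a / pmf D b) * EE D n (\<lambda>z. if snd z ! i = b then g z else 0)"
proof -
  define G where "G y = (\<Sum>x\<in>LL n. wt D x * g (x, y))" for y
  have sw: "EE D n h = (\<Sum>y\<in>LL n. \<Sum>x\<in>LL n. wt D x * wt D y * h (x, y))" for h
    unfolding EE_split by (rule sum.swap)
  have "EE D n (\<lambda>z. if snd z ! i = a then g (fst z, (snd z)[i := b]) else 0)
      = (\<Sum>y\<in>LL n. if y ! i = a then wt D y * G (y[i := b]) else 0)"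
    unfolding sw G_def by (intro sum.cong refl) (auto simp: sum_distrib_left mult_ac)
  also have "\<dots> = (pmf D a / pmf D b) * (\<Sum>y\<in>LL n. if y ! i = b then wt D y * G y else 0)"
    by (rule exchange1[OF assms])
  also have "(\<Sum>y\<in>LL n. if y ! i = b then wt D y * G y else 0) = EE D n (\<lambda>z. if snd z ! i = b then g z else 0)"
    unfolding sw G_def by (intro sum.cong refl) (auto simp: sum_distrib_left mult_ac)
  finally show ?thesis .
qed

lemma occ_sum:
  assumes "length x = n" "length y = n"
  shows "(\<Sum>k\<in>occurrences a x y. G k) =
    (\<Sum>i<n. if x ! i = a then G (Inl i) else 0) + (\<Sum>j<n. if y ! j = a then G (Inr j) else 0)"
proof -
  have "(\<Sum>k\<in>occurrences a x y. G k) = (\<Sum>k\<in>Inl ` {i. i < n \<and> x ! i = a}. G k) + (\<Sum>k\<in>Inr ` {j. j < n \<and> y ! j = a}. G k)"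
    unfolding occurrences_def assms by (subst sum.union_disjoint) auto
  also have "\<dots> = (\<Sum>i\<in>{i. i < n \<and> x ! i = a}. G (Inl i)) + (\<Sum>j\<in>{j. j < n \<and> y ! j = a}. G (Inr j))"
    by (simp add: sum.reindex)
  also have "\<dots> = (\<Sum>i<n. if x ! i = a then G (Inl i) else 0) + (\<Sum>j<n. if y ! j = a then G (Inr j) else 0)"
    by (simp add: sum.If_cases Int_def lessThan_def conj_commute)
  finally show ?thesis .
qed

lemma card_occ:
  assumes "length x = n" "length y = n"
  shows "real (card (occurrences a x y)) =
    (\<Sum>i<n. if x ! i = a then 1 else 0) + (\<Sum>j<n. if y ! j = a then 1 else 0)"
  using occ_sum[OF assms, where a=a and G="\<lambda>_. 1::real"] by simp

lemma if01_mult: "(if P then 1 else 0) * (t::real) = (if P then t else 0)"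
  by simp

lemma exch_main:
  fixes D :: "'a::finite pmf"
  assumes ab: "a \<noteq> b" and pb: "pmf D b > 0"
  shows "EE D n (\<lambda>z. \<Sum>k\<in>occurrences a (fst z) (snd z). g (replace_at b (fst z) (snd z) k) - g z)
       = EE D n (\<lambda>z. ((pmf D a / pmf D b) * card (occurrences b (fst z) (snd z))
                         - card (occurrences a (fst z) (snd z))) * g z)"
proof -
  define r where "r = pmf D a / pmf D b"
  define A where "A i z = (if fst z ! i = a then g ((fst z)[i := b], snd z) else 0)" for i z
  define B where "B c i z = (if fst z ! i = c then g z else 0)" for c i z
  define A' where "A' i z = (if snd z ! i = a then g (fst z, (snd z)[i := b]) else 0)" for i z
  define B' where "B' c i z = (if snd z ! i = c then g z else 0)" for c i z
  have L: "EE D n (\<lambda>z. \<Sum>k\<in>occurrences a (fst z) (snd z). g (replace_at b (fst z) (snd z) k) - g z)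
      = EE D n (\<lambda>z. ((\<Sum>i<n. A i z) - (\<Sum>i<n. B a i z)) + ((\<Sum>i<n. A' i z) - (\<Sum>i<n. B' a i z)))"
  proof (rule EE_cong)
    fix z :: "'a list \<times> 'a list" assume z: "z \<in> LL n \<times> LL n"
    obtain x y :: "'a list" where xy: "z = (x, y)" by (cases z)
    have "(\<Sum>k\<in>occurrences a x y. g (replace_at b x y k) - g (x,y)) =
      (\<Sum>i<n. if x ! i = a then g (replace_at b x y (Inl i)) - g (x,y) else 0) +
      (\<Sum>j<n. if y ! j = a then g (replace_at b x y (Inr j)) - g (x,y) else 0)"
      using z xy by (intro occ_sum) (auto simp: LL_def)
    also have "\<dots> = ((\<Sum>i<n. A i z) - (\<Sum>i<n. B a i z)) + ((\<Sum>i<n. A' i z) - (\<Sum>i<n. B' a i z))"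
      unfolding sum_subtractf[symmetric] A_def B_def A'_def B'_def xy
      by (intro arg_cong2[where f="(+)"] sum.cong) (auto simp: replace_at_def)
    finally show "(\<Sum>k\<in>occurrences a (fst z) (snd z). g (replace_at b (fst z) (snd z) k) - g z) =
      ((\<Sum>i<n. A i z) - (\<Sum>i<n. B a i z)) + ((\<Sum>i<n. A' i z) - (\<Sum>i<n. B' a i z))"
      using xy by simp
  qed
  also have "\<dots> = ((\<Sum>i<n. EE D n (A i)) - (\<Sum>i<n. EE D n (B a i))) + ((\<Sum>i<n. EE D n (A' i)) - (\<Sum>i<n. EE D n (B' a i)))"
    by (simp add: EE_add EE_diff EE_sum)
  also have "(\<Sum>i<n. EE D n (A i)) = (\<Sum>i<n. r * EE D n (B b i))"
    unfolding A_def B_def r_def by (intro sum.cong refl exch_x[OF _ ab pb]) auto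
  also have "(\<Sum>i<n. EE D n (A' i)) = (\<Sum>i<n. r * EE D n (B' b i))"
    unfolding A'_def B'_def r_def by (intro sum.cong refl exch_y[OF _ ab pb]) auto
  also have "((\<Sum>i<n. r * EE D n (B b i)) - (\<Sum>i<n. EE D n (B a i))) + ((\<Sum>i<n. r * EE D n (B' b i)) - (\<Sum>i<n. EE D n (B' a i)))
     = EE D n (\<lambda>z. r * ((\<Sum>i<n. B b i z) + (\<Sum>i<n. B' b i z)) - ((\<Sum>i<n. B a i z) + (\<Sum>i<n. B' a i z)))"
    by (simp add: EE_add EE_diff EE_sum EE_cmult sum_distrib_left[symmetric] distrib_left)
  also have "\<dots> = EE D n (\<lambda>z. (r * card (occurrences b (fst z) (snd z))
                         - card (occurrences a (fst z) (snd z))) * g z)"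
  proof (rule EE_cong)
    fix z :: "'a list \<times> 'a list" assume z: "z \<in> LL n \<times> LL n"
    obtain x y :: "'a list" where xy: "z = (x, y)" by (cases z)
    have lx: "length x = n" "length y = n" using z xy by (auto simp: LL_def)
    have cB: "(\<Sum>i<n. B c i z) + (\<Sum>i<n. B' c i z) = card (occurrences c (fst z) (snd z)) * g z" for c
      unfolding xy fst_conv snd_conv card_occ[OF lx] B_def B'_def
      by (simp add: distrib_right sum_distrib_right if01_mult)
    show "r * ((\<Sum>i<n. B b i z) + (\<Sum>i<n. B' b i z)) - ((\<Sum>i<n. B a i z) + (\<Sum>i<n. B' a i z)) =
      (r * card (occurrences b (fst z) (snd z)) - card (occurrences a (fst z) (snd z))) * g z"
      by (simp only: cB) (simp add: algebra_simps)
  qed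
  finally show ?thesis unfolding r_def .
qed



lemma align_sorted_fst:
  assumes "\<pi> \<in> alignments m m'"
  shows "sorted_wrt (\<lambda>p q. fst p < fst q) \<pi>" "sorted_wrt (\<lambda>p q. snd p < snd q) \<pi>"
  using assms unfolding alignments_def
  by (auto elim!: sorted_wrt_mono_rel[rotated] simp: split_beta)

lemma filter_le1:
  assumes "sorted_wrt (\<lambda>p q. g p < (g q :: nat)) \<pi>"
  shows "length (filter (\<lambda>p. g p = i) \<pi>) \<le> 1"
  using assms
proof (induction \<pi>)
  case Nil then show ?case by simp
next
  case (Cons p \<pi>)
  show ?case
  proof (cases "g p = i")
    case True
    then have "filter (\<lambda>p. g p = i) \<pi> = []" using Cons.prems by (auto simp: filter_empty_conv)
    then show ?thesis using True by simp
  next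
    case False then show ?thesis using Cons by simp
  qed
qed

lemma sum_list_abs_bound:
  fixes h :: "'b \<Rightarrow> real"
  assumes "\<And>p. p \<in> set \<pi> \<Longrightarrow> \<bar>h p\<bar> \<le> (if P p then c else 0)"
  shows "\<bar>sum_list (map h \<pi>)\<bar> \<le> c * length (filter P \<pi>)"
  using assms
proof (induction \<pi>)
  case Nil then show ?case by simp
next
  case (Cons p \<pi>)
  have h: "\<bar>h p\<bar> \<le> (if P p then c else 0)" using Cons.prems by simp
  have "\<bar>sum_list (map h (p # \<pi>))\<bar> \<le> \<bar>h p\<bar> + \<bar>sum_list (map h \<pi>)\<bar>" by simp
  also have "\<dots> \<le> (if P p then c else 0) + c * length (filter P \<pi>)"
    using h Cons by (intro add_mono) auto
  finally show ?case by (cases "P p") (auto simp: algebra_simps)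
qed

lemma finite_alignments: "finite (alignments m m')"
proof -
  have "alignments m m' \<subseteq> {\<pi>. set \<pi> \<subseteq> {..<m} \<times> {..<m'} \<and> length \<pi> \<le> m}"
  proof
    fix \<pi> assume a: "\<pi> \<in> alignments m m'"
    have "sorted_wrt (<) (map fst \<pi>)" using align_sorted_fst(1)[OF a] by (simp add: sorted_wrt_map)
    then have d: "distinct (map fst \<pi>)" by (simp add: strict_sorted_iff)
    have s: "set \<pi> \<subseteq> {..<m} \<times> {..<m'}" using a by (auto simp: alignments_def)
    then have "set (map fst \<pi>) \<subseteq> {..<m}" by auto
    then have "card (set (map fst \<pi>)) \<le> m" using card_mono[of "{..<m}"] by fastforce
    then have "length \<pi> \<le> m" using distinct_card[OF d] by simp
    then show "\<pi> \<in> {\<pi>. set \<pi> \<subseteq> {..<m} \<times> {..<m'} \<and> length \<pi> \<le> m}" using s by simp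
  qed
  then show ?thesis by (rule finite_subset) (intro finite_lists_length_le finite_cartesian_product; simp)
qed

lemma alignments_ne: "[] \<in> alignments m m'"
  by (simp add: alignments_def)

lemma Max_diff:
  fixes F G :: "'b \<Rightarrow> real"
  assumes "finite A" "A \<noteq> {}" "\<And>p. p \<in> A \<Longrightarrow> \<bar>F p - G p\<bar> \<le> M"
  shows "\<bar>Max (F ` A) - Max (G ` A)\<bar> \<le> M"
proof -
  have 1: "Max (F ` A) \<le> Max (G ` A) + M"
  proof (subst Max_le_iff)
    show "\<forall>a\<in>F ` A. a \<le> Max (G ` A) + M"
    proof
      fix t assume "t \<in> F ` A"
      then obtain p where p: "p \<in> A" "t = F p" by auto
      have "G p \<le> Max (G ` A)" using p assms by (intro Max_ge) auto
      then show "t \<le> Max (G ` A) + M" using assms(3)[OF p(1)] p by linarith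
    qed
  qed (use assms in auto)
  have 2: "Max (G ` A) \<le> Max (F ` A) + M"
  proof (subst Max_le_iff)
    show "\<forall>a\<in>G ` A. a \<le> Max (F ` A) + M"
    proof
      fix t assume "t \<in> G ` A"
      then obtain p where p: "p \<in> A" "t = G p" by auto
      have "F p \<le> Max (F ` A)" using p assms by (intro Max_ge) auto
      then show "t \<le> Max (F ` A) + M" using assms(3)[OF p(1)] p by linarith
    qed
  qed (use assms in auto)
  show ?thesis using 1 2 by linarith
qed

lemma sum_single_bound:
  fixes h :: "nat \<Rightarrow> real"
  assumes "finite T" "\<And>t. t \<in> T \<Longrightarrow> \<bar>h t\<bar> \<le> (if t = i then c else 0)" "c \<ge> 0"
  shows "\<bar>sum h T\<bar> \<le> c"
proof -
  have "\<bar>sum h T\<bar> \<le> (\<Sum>t\<in>T. \<bar>h t\<bar>)" by (rule sum_abs)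
  also have "\<dots> \<le> (\<Sum>t\<in>T. if t = i then c else 0)" using assms by (intro sum_mono) auto
  also have "\<dots> \<le> c" using assms by (simp add: sum.delta')
  finally show ?thesis .
qed

lemma align_upd_x:
  assumes K: "\<And>u v. \<bar>S u v\<bar> \<le> K" and pi: "\<pi> \<in> alignments (length x) (length y)"
    and i: "i < length x"
  shows "\<bar>align_score S (x[i := c]) y \<pi> - align_score S x y \<pi>\<bar> \<le> 4 * K"
proof -
  have K0: "K \<ge> 0" using K[of None None] by linarith
  have A: "\<bar>(\<Sum>(i',j)\<leftarrow>\<pi>. S (Some (x[i:=c] ! i')) (Some (y!j))) - (\<Sum>(i',j)\<leftarrow>\<pi>. S (Some (x ! i')) (Some (y!j)))\<bar> \<le> 2 * K"
  proof -
    have "\<bar>(\<Sum>(i',j)\<leftarrow>\<pi>. S (Some (x[i:=c] ! i')) (Some (y!j))) - (\<Sum>(i',j)\<leftarrow>\<pi>. S (Some (x ! i')) (Some (y!j)))\<bar>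
        = \<bar>sum_list (map (\<lambda>p. S (Some (x[i:=c] ! fst p)) (Some (y!snd p)) - S (Some (x ! fst p)) (Some (y!snd p))) \<pi>)\<bar>"
      by (simp add: sum_list_subtractf case_prod_unfold)
    also have "\<dots> \<le> (2*K) * length (filter (\<lambda>p. fst p = i) \<pi>)"
    proof (rule sum_list_abs_bound)
      fix p
      show "\<bar>S (Some (x[i := c] ! fst p)) (Some (y ! snd p)) - S (Some (x ! fst p)) (Some (y ! snd p))\<bar>
         \<le> (if fst p = i then 2 * K else 0)"
        using K[of "Some (x[i := c] ! fst p)" "Some (y ! snd p)"] K[of "Some (x ! fst p)" "Some (y ! snd p)"]
        by (auto simp: nth_list_update)
    qed
    also have "\<dots> \<le> 2 * K * 1"
      using filter_le1[OF align_sorted_fst(1)[OF pi], of i] K0 by (intro mult_left_mono) auto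
    finally show ?thesis by simp
  qed
  have B: "\<bar>(\<Sum>i'\<in>{..<length x} - fst ` set \<pi>. S (Some (x[i:=c] ! i')) None) - (\<Sum>i'\<in>{..<length x} - fst ` set \<pi>. S (Some (x ! i')) None)\<bar> \<le> 2 * K"
    unfolding sum_subtractf[symmetric]
  proof (rule sum_single_bound)
    fix t show "\<bar>S (Some (x[i := c] ! t)) None - S (Some (x ! t)) None\<bar> \<le> (if t = i then 2 * K else 0)"
      using K[of "Some (x[i := c] ! t)" None] K[of "Some (x ! t)" None]
      by (auto simp: nth_list_update)
  qed (use K0 in auto)
  show ?thesis
    unfolding align_score_def using A B by (simp add: abs_le_iff)
qed

lemma align_upd_y:
  assumes K: "\<And>u v. \<bar>S u v\<bar> \<le> K" and pi: "\<pi> \<in> alignments (length x) (length y)"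
    and i: "i < length y"
  shows "\<bar>align_score S x (y[i := c]) \<pi> - align_score S x y \<pi>\<bar> \<le> 4 * K"
proof -
  have K0: "K \<ge> 0" using K[of None None] by linarith
  have A: "\<bar>(\<Sum>(j,i')\<leftarrow>\<pi>. S (Some (x ! j)) (Some (y[i:=c]!i'))) - (\<Sum>(j,i')\<leftarrow>\<pi>. S (Some (x ! j)) (Some (y!i')))\<bar> \<le> 2 * K"
  proof -
    have "\<bar>(\<Sum>(j,i')\<leftarrow>\<pi>. S (Some (x ! j)) (Some (y[i:=c]!i'))) - (\<Sum>(j,i')\<leftarrow>\<pi>. S (Some (x ! j)) (Some (y!i')))\<bar>
        = \<bar>sum_list (map (\<lambda>p. S (Some (x ! fst p)) (Some (y[i:=c] ! snd p)) - S (Some (x ! fst p)) (Some (y!snd p))) \<pi>)\<bar>"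
      by (simp add: sum_list_subtractf case_prod_unfold)
    also have "\<dots> \<le> (2*K) * length (filter (\<lambda>p. snd p = i) \<pi>)"
    proof (rule sum_list_abs_bound)
      fix p
      show "\<bar>S (Some (x ! fst p)) (Some (y[i := c] ! snd p)) - S (Some (x ! fst p)) (Some (y ! snd p))\<bar>
         \<le> (if snd p = i then 2 * K else 0)"
        using K[of "Some (x ! fst p)" "Some (y[i := c] ! snd p)"] K[of "Some (x ! fst p)" "Some (y ! snd p)"]
        by (auto simp: nth_list_update)
    qed
    also have "\<dots> \<le> 2 * K * 1"
      using filter_le1[OF align_sorted_fst(2)[OF pi], of i] K0 by (intro mult_left_mono) auto
    finally show ?thesis by simp
  qed
  have B: "\<bar>(\<Sum>i'\<in>{..<length y} - snd ` set \<pi>. S None (Some (y[i:=c] ! i'))) - (\<Sum>i'\<in>{..<length y} - snd ` set \<pi>. S None (Some (y ! i')))\<bar> \<le> 2 * K"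
    unfolding sum_subtractf[symmetric]
  proof (rule sum_single_bound)
    fix t show "\<bar>S None (Some (y[i := c] ! t)) - S None (Some (y ! t))\<bar> \<le> (if t = i then 2 * K else 0)"
      using K[of None "Some (y[i := c] ! t)"] K[of None "Some (y ! t)"]
      by (auto simp: nth_list_update)
  qed (use K0 in auto)
  show ?thesis
    unfolding align_score_def using A B by (simp add: abs_le_iff)
qed

lemma opt_upd_x:
  assumes K: "\<And>u v. \<bar>S u v\<bar> \<le> K" and i: "i < length x"
  shows "\<bar>opt_score S (x[i := c]) y - opt_score S x y\<bar> \<le> 4 * K"
  unfolding opt_score_def length_list_update
proof (rule Max_diff)
  show "alignments (length x) (length y) \<noteq> {}" using alignments_ne by blast
qed (auto simp: finite_alignments intro: align_upd_x[OF K _ i])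

lemma opt_upd_y:
  assumes K: "\<And>u v. \<bar>S u v\<bar> \<le> K" and i: "i < length y"
  shows "\<bar>opt_score S x (y[i := c]) - opt_score S x y\<bar> \<le> 4 * K"
  unfolding opt_score_def length_list_update
proof (rule Max_diff)
  show "alignments (length x) (length y) \<noteq> {}" using alignments_ne by blast
qed (auto simp: finite_alignments intro: align_upd_y[OF K _ i])



lemma wvar_eq:
  fixes p v :: "'b \<Rightarrow> real"
  assumes "finite I" "sum p I = 1"
  shows "(\<Sum>c\<in>I. p c * (v c)\<^sup>2) - (\<Sum>c\<in>I. p c * v c)\<^sup>2 = (\<Sum>c\<in>I. p c * (v c - (\<Sum>d\<in>I. p d * v d))\<^sup>2)"
proof -
  define m where "m = (\<Sum>d\<in>I. p d * v d)"
  have "(\<Sum>c\<in>I. p c * (v c - m)\<^sup>2) = (\<Sum>c\<in>I. p c * (v c)\<^sup>2 - 2 * m * (p c * v c) + m\<^sup>2 * p c)"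
    by (intro sum.cong refl) (simp add: power2_diff algebra_simps)
  also have "\<dots> = (\<Sum>c\<in>I. p c * (v c)\<^sup>2) - 2 * m * m + m\<^sup>2 * 1"
    using assms by (simp add: sum.distrib sum_subtractf sum_distrib_left[symmetric] m_def)
  finally show ?thesis unfolding m_def by (simp add: power2_eq_square)
qed

lemma wvar_bound:
  fixes p v :: "'b \<Rightarrow> real"
  assumes "finite I" "sum p I = 1" "\<And>c. c \<in> I \<Longrightarrow> p c \<ge> 0"
    and "\<And>c d. c \<in> I \<Longrightarrow> d \<in> I \<Longrightarrow> \<bar>v c - v d\<bar> \<le> M"
  shows "(\<Sum>c\<in>I. p c * (v c)\<^sup>2) - (\<Sum>c\<in>I. p c * v c)\<^sup>2 \<le> M\<^sup>2"
proof -
  define m where "m = (\<Sum>d\<in>I. p d * v d)"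
  have b: "\<bar>v c - m\<bar> \<le> M" if c: "c \<in> I" for c
  proof -
    have "v c - m = (\<Sum>d\<in>I. p d * (v c - v d))"
      using assms(2) by (simp add: m_def algebra_simps sum_subtractf sum_distrib_right[symmetric])
    then have "\<bar>v c - m\<bar> \<le> (\<Sum>d\<in>I. \<bar>p d * (v c - v d)\<bar>)" using sum_abs by simp
    also have "\<dots> \<le> (\<Sum>d\<in>I. p d * M)"
      using assms c by (intro sum_mono) (simp add: abs_mult mult_left_mono)
    also have "\<dots> = M" using assms(2) by (simp add: sum_distrib_right[symmetric])
    finally show ?thesis .
  qed
  have "(\<Sum>c\<in>I. p c * (v c - m)\<^sup>2) \<le> (\<Sum>c\<in>I. p c * M\<^sup>2)"
  proof (intro sum_mono mult_left_mono)
    fix c assume c: "c \<in> I"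
    show "(v c - m)\<^sup>2 \<le> M\<^sup>2" using power_mono[OF b[OF c] abs_ge_zero, of 2] by simp
  qed (use assms in auto)
  also have "\<dots> = M\<^sup>2" using assms(2) by (simp add: sum_distrib_right[symmetric])
  finally show ?thesis using wvar_eq[OF assms(1,2), of v] unfolding m_def by simp
qed

lemma ES:
  fixes D :: "'a::finite pmf" and h :: "'a list \<Rightarrow> real"
  assumes "M \<ge> 0" and "\<And>z k c. z \<in> LL n \<Longrightarrow> k < n \<Longrightarrow> \<bar>h (z[k := c]) - h z\<bar> \<le> M"
  shows "(\<Sum>z\<in>LL n. wt D z * (h z)\<^sup>2) - (\<Sum>z\<in>LL n. wt D z * h z)\<^sup>2 \<le> real n * M\<^sup>2"
  using assms(2)
proof (induction n arbitrary: h)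
  case 0
  have "LL 0 = {[] :: 'a list}" by (auto simp: LL_def)
  then show ?case by simp
next
  case (Suc n)
  define m where "m c = (\<Sum>z\<in>LL n. wt D z * h (c # z))" for c
  define q where "q c = (\<Sum>z\<in>LL n. wt D z * (h (c # z))\<^sup>2)" for c
  have q: "q c \<le> real n * M\<^sup>2 + (m c)\<^sup>2" for c
  proof -
    have "q c - (m c)\<^sup>2 \<le> real n * M\<^sup>2"
      unfolding q_def m_def
    proof (rule Suc.IH)
      fix z :: "'a list" and k d assume z: "z \<in> LL n" and k: "k < n"
      have "c # z \<in> LL (Suc n)" using z by (simp add: LL_def)
      then show "\<bar>h (c # z[k := d]) - h (c # z)\<bar> \<le> M"
        using Suc.prems[of "c # z" "Suc k" d] k by simp
    qed
    then show ?thesis by simp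
  qed
  have sq: "(\<Sum>z\<in>LL (Suc n). wt D z * (h z)\<^sup>2) = (\<Sum>c\<in>UNIV. pmf D c * q c)"
    unfolding sum_LL_Suc q_def by (simp add: sum_distrib_left mult_ac)
  have sm: "(\<Sum>z\<in>LL (Suc n). wt D z * h z) = (\<Sum>c\<in>UNIV. pmf D c * m c)"
    unfolding sum_LL_Suc m_def by (simp add: sum_distrib_left mult_ac)
  have "(\<Sum>c\<in>UNIV. pmf D c * q c) \<le> (\<Sum>c\<in>UNIV. pmf D c * (real n * M\<^sup>2 + (m c)\<^sup>2))"
    by (intro sum_mono mult_left_mono q) auto
  also have "\<dots> = real n * M\<^sup>2 + (\<Sum>c\<in>UNIV. pmf D c * (m c)\<^sup>2)"
  proof -
    have "(\<Sum>c\<in>UNIV. pmf D c * (real n * M\<^sup>2)) = real n * M\<^sup>2"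
      by (simp add: sum_distrib_right[symmetric] sum_pmf_UNIV)
    then show ?thesis by (simp add: distrib_left sum.distrib)
  qed
  finally have 1: "(\<Sum>c\<in>UNIV. pmf D c * q c) \<le> real n * M\<^sup>2 + (\<Sum>c\<in>UNIV. pmf D c * (m c)\<^sup>2)" .
  have 2: "(\<Sum>c\<in>UNIV. pmf D c * (m c)\<^sup>2) - (\<Sum>c\<in>UNIV. pmf D c * m c)\<^sup>2 \<le> M\<^sup>2"
  proof (rule wvar_bound)
    fix c d :: 'a
    have "m c - m d = (\<Sum>z\<in>LL n. wt D z * (h (c # z) - h (d # z)))"
      unfolding m_def by (simp add: algebra_simps sum_subtractf)
    then have "\<bar>m c - m d\<bar> \<le> (\<Sum>z\<in>LL n. \<bar>wt D z * (h (c # z) - h (d # z))\<bar>)" using sum_abs by simp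
    also have "\<dots> \<le> (\<Sum>z\<in>LL n. wt D z * M)"
    proof (intro sum_mono)
      fix z :: "'a list" assume z: "z \<in> LL n"
      have "c # z \<in> LL (Suc n)" using z by (simp add: LL_def)
      then have "\<bar>h (d # z) - h (c # z)\<bar> \<le> M" using Suc.prems[of "c # z" 0 d] by simp
      then show "\<bar>wt D z * (h (c # z) - h (d # z))\<bar> \<le> wt D z * M"
        by (simp add: abs_mult wt_nonneg abs_minus_commute mult_left_mono)
    qed
    also have "\<dots> = M" by (simp add: sum_distrib_right[symmetric] sum_wt)
    finally show "\<bar>m c - m d\<bar> \<le> M" .
  qed (auto simp: sum_pmf_UNIV)
  show ?case unfolding sq sm using 1 2 by (simp add: algebra_simps)
qed

lemma EE_concat:
  fixes D :: "'a::finite pmf"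
  shows "EE D n g = (\<Sum>z\<in>LL (n + n). wt D z * g (take n z, drop n z))"
proof -
  have inj: "inj_on (\<lambda>(x, y). x @ y) (LL n \<times> (LL n :: 'a list set))"
    by (auto simp: inj_on_def LL_def)
  have img: "(\<lambda>(x, y). x @ y) ` (LL n \<times> LL n) = (LL (n + n) :: 'a list set)"
  proof
    show "LL (n + n) \<subseteq> (\<lambda>(x, y). x @ y) ` (LL n \<times> (LL n :: 'a list set))"
    proof
      fix z :: "'a list" assume "z \<in> LL (n + n)"
      then have "(take n z, drop n z) \<in> LL n \<times> LL n" "z = (\<lambda>(x, y). x @ y) (take n z, drop n z)"
        by (auto simp: LL_def)
      then show "z \<in> (\<lambda>(x, y). x @ y) ` (LL n \<times> LL n)" by blast
    qed
  qed (auto simp: LL_def)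
  have "(\<Sum>z\<in>LL (n + n). wt D z * g (take n z, drop n z)) =
        (\<Sum>p\<in>LL n \<times> LL n. wt D (fst p @ snd p) * g (take n (fst p @ snd p), drop n (fst p @ snd p)))"
    by (subst img[symmetric], subst sum.reindex[OF inj]) (simp add: split_beta)
  also have "\<dots> = EE D n g"
    unfolding EE_def by (intro sum.cong refl) (auto simp: LL_def wt_append)
  finally show ?thesis by simp
qed

lemma EE_var_upper:
  fixes D :: "'a::finite pmf"
  assumes M: "M \<ge> 0"
    and bx: "\<And>x y i c. i < length x \<Longrightarrow> \<bar>g (x[i := c], y) - g (x, y)\<bar> \<le> M"
    and by': "\<And>x y i c. i < length y \<Longrightarrow> \<bar>g (x, y[i := c]) - g (x, y)\<bar> \<le> M"
  shows "EE D n (\<lambda>z. (g z)\<^sup>2) - (EE D n g)\<^sup>2 \<le> real (n + n) * M\<^sup>2"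
  unfolding EE_concat
proof (rule ES[OF M])
  fix z :: "'a list" and k c assume z: "z \<in> LL (n + n)" and k: "k < n + n"
  have lz: "length z = n + n" using z by (simp add: LL_def)
  show "\<bar>g (take n (z[k := c]), drop n (z[k := c])) - g (take n z, drop n z)\<bar> \<le> M"
  proof (cases "k < n")
    case True
    then show ?thesis using bx[of k "take n z" c "drop n z"] lz by (simp add: take_update_swap)
  next
    case False
    then show ?thesis using by'[of "k - n" "drop n z" "take n z" c] lz k by (simp add: drop_update_swap)
  qed
qed

lemma var_eq:
  fixes D :: "'a::finite pmf"
  shows "measure_pmf.variance (XY_pmf D n) F = EE D n (\<lambda>z. (F z)\<^sup>2) - (EE D n F)\<^sup>2"
proof -
  have "measure_pmf.variance (XY_pmf D n) F = EE D n (\<lambda>z. (F z - EE D n F)\<^sup>2)"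
    by (simp add: exp_XY EE_def)
  also have "\<dots> = EE D n (\<lambda>z. (F z)\<^sup>2 - (2 * EE D n F) * F z + (EE D n F)\<^sup>2)"
    by (intro EE_cong) (simp add: power2_diff)
  also have "\<dots> = EE D n (\<lambda>z. (F z)\<^sup>2) - (EE D n F)\<^sup>2"
    by (simp add: EE_add EE_diff EE_cmult EE_const power2_eq_square)
  finally show ?thesis .
qed



lemma powr_small:
  fixes \<alpha> \<epsilon> :: real
  assumes "\<alpha> > 0" "\<epsilon> > 0"
  shows "\<forall>\<^sub>F n in sequentially. real n powr (- \<alpha> * ln (real n)) \<le> \<epsilon>"
proof -
  have "((\<lambda>n. real n powr (- \<alpha>)) \<longlongrightarrow> 0) sequentially"
    using assms by (intro tendsto_neg_powr filterlim_real_sequentially) auto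
  then have ev1: "\<forall>\<^sub>F n in sequentially. real n powr (- \<alpha>) < \<epsilon>"
    using assms by (intro order_tendstoD(2)) auto
  have ev2: "\<forall>\<^sub>F n in sequentially. n \<ge> (3::nat)" by (rule eventually_ge_at_top)
  show ?thesis
  proof (rule eventually_mono[OF eventually_conj[OF ev1 ev2]])
    fix n :: nat assume n: "real n powr (- \<alpha>) < \<epsilon> \<and> 3 \<le> n"
    have "ln (real n) \<ge> ln (exp 1)"
    proof -
      have "exp (1::real) \<le> 3" using exp_le by simp
      then have "exp 1 \<le> real n" using n by linarith
      then show ?thesis using n by (subst ln_le_cancel_iff) auto
    qed
    then have ln1: "ln (real n) \<ge> 1" by simp
    have "real n powr (- \<alpha> * ln (real n)) \<le> real n powr (- \<alpha>)"
      using n ln1 assms(1) by (intro powr_mono) (auto simp: mult_le_cancel_left1)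
    then show "real n powr (- \<alpha> * ln (real n)) \<le> \<epsilon>" using n by linarith
  qed
qed

lemma finite_occ: "finite (occurrences a x y)"
  unfolding occurrences_def by auto

lemma occ_replace_b:
  assumes "k \<in> occurrences a x y" "a \<noteq> b"
  shows "occurrences b (fst (replace_at b x y k)) (snd (replace_at b x y k)) = insert k (occurrences b x y)"
    and "k \<notin> occurrences b x y"
  using assms by (cases k; auto simp: occurrences_def replace_at_def nth_list_update)+

lemma occ_replace_a:
  assumes "k \<in> occurrences a x y" "a \<noteq> b"
  shows "occurrences a (fst (replace_at b x y k)) (snd (replace_at b x y k)) = occurrences a x y - {k}"
  using assms by (cases k; auto simp: occurrences_def replace_at_def nth_list_update)

lemma occ_bound:
  assumes "k \<in> occurrences a x y"
  shows "(case k of Inl i \<Rightarrow> i < length x \<and> replace_at b x y k = (x[i := b], y)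
                  | Inr j \<Rightarrow> j < length y \<and> replace_at b x y k = (x, y[j := b]))"
  using assms by (cases k) (auto simp: occurrences_def replace_at_def)

lemma cond_inc_sum:
  "real (card (occurrences a x y)) * cond_increment S a b x y =
     (\<Sum>k\<in>occurrences a x y. opt_score S (fst (replace_at b x y k)) (snd (replace_at b x y k)) - opt_score S x y)"
proof (cases "occurrences a x y = {}")
  case True
  then show ?thesis by (simp add: cond_increment_def perturb_pmf_def)
next
  case False
  have "cond_increment S a b x y =
     (\<Sum>k\<in>occurrences a x y. opt_score S (fst (replace_at b x y k)) (snd (replace_at b x y k)) - opt_score S x y)
      / real (card (occurrences a x y))"
    unfolding cond_increment_def perturb_pmf_def using False
    by (simp add: integral_pmf_of_set[OF False finite_occ] case_prod_unfold)
  moreover have "card (occurrences a x y) > 0" using False finite_occ by (simp add: card_gt_0_iff)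
  ultimately show ?thesis by simp
qed

lemma EE_marg_x:
  fixes D :: "'a::finite pmf"
  assumes "i < n"
  shows "EE D n (\<lambda>z. if fst z ! i = c then 1 else 0) = pmf D c"
proof -
  have "EE D n (\<lambda>z. if fst z ! i = c then 1 else 0) =
     (\<Sum>x\<in>LL n. if x ! i = c then wt D x else 0) * (\<Sum>y\<in>LL n. wt D y)"
    unfolding EE_split sum_product by (intro sum.cong refl) auto
  then show ?thesis using marginal[OF assms] by (simp add: sum_wt)
qed

lemma EE_marg_y:
  fixes D :: "'a::finite pmf"
  assumes "i < n"
  shows "EE D n (\<lambda>z. if snd z ! i = c then 1 else 0) = pmf D c"
proof -
  have "EE D n (\<lambda>z. if snd z ! i = c then 1 else 0) =
     (\<Sum>x\<in>LL n. wt D x) * (\<Sum>y\<in>LL n. if y ! i = c then wt D y else 0)"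
    unfolding EE_split sum_product by (intro sum.cong refl) auto
  then show ?thesis using marginal[OF assms] by (simp add: sum_wt)
qed

lemma EE_card_occ:
  fixes D :: "'a::finite pmf"
  shows "EE D n (\<lambda>z. real (card (occurrences c (fst z) (snd z)))) = 2 * real n * pmf D c"
proof -
  have "EE D n (\<lambda>z. real (card (occurrences c (fst z) (snd z)))) =
        EE D n (\<lambda>z. (\<Sum>i<n. if fst z ! i = c then 1 else 0) + (\<Sum>j<n. if snd z ! j = c then 1 else 0))"
    by (intro EE_cong card_occ) (auto simp: LL_def)
  also have "\<dots> = (\<Sum>i<n. pmf D c) + (\<Sum>j<n. pmf D c)"
    by (simp add: EE_add EE_sum EE_marg_x EE_marg_y)
  finally show ?thesis by simp
qed

lemma card_occ_le:
  assumes "length x = n" "length y = n"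
  shows "real (card (occurrences c x y)) \<le> 2 * real n"
proof -
  have "(\<Sum>i<n. if x ! i = c then 1 else 0) \<le> (\<Sum>i<n. (1::real))" by (intro sum_mono) auto
  moreover have "(\<Sum>i<n. if y ! i = c then 1 else 0) \<le> (\<Sum>i<n. (1::real))" by (intro sum_mono) auto
  ultimately show ?thesis unfolding card_occ[OF assms] by simp
qed

lemma var_EE:
  fixes D :: "'a::finite pmf"
  shows "measure_pmf.variance (XY_pmf D n) F = EE D n (\<lambda>z. (F z - EE D n F)\<^sup>2)"
  by (simp add: exp_XY EE_def)

lemma half_lemma: "(Q::real) / s = 2 * (Q / (2 * s))"
  by (cases "s = 0") (simp_all add: field_simps)

lemma final_arith:
  fixes V X Y t n pa r \<Delta> :: real
  assumes "2 * t * X \<le> t\<^sup>2 * Y + V" "X \<ge> n * \<Delta> * pa" "Y = (r + 1) * (2 * n * pa)"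
    "t = \<Delta> / (2 * (r + 1))" "r \<ge> 0" "\<Delta> > 0" "n \<ge> 0" "pa \<ge> 0"
  shows "V \<ge> pa * \<Delta>\<^sup>2 / (2 * (r + 1)) * n"
proof -
  have t0: "t \<ge> 0" using assms by simp
  have "V \<ge> 2 * t * X - t\<^sup>2 * Y" using assms(1) by linarith
  moreover have "2 * t * X \<ge> 2 * t * (n * \<Delta> * pa)" using t0 assms(2) by (intro mult_left_mono) auto
  moreover have "2 * t * (n * \<Delta> * pa) - t\<^sup>2 * Y = pa * \<Delta>\<^sup>2 / (2 * (r + 1)) * n"
  proof -
    have r1: "r + 1 > 0" using assms(5) by simp
    have e1: "2 * t * (n * \<Delta> * pa) = n * \<Delta>\<^sup>2 * pa / (r + 1)"
      unfolding assms(4) using r1 by (simp add: field_simps power2_eq_square)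
    have e3: "t * Y = \<Delta> * n * pa"
      unfolding assms(3,4) using r1 by (simp add: field_simps)
    have e2: "t\<^sup>2 * Y = n * \<Delta>\<^sup>2 * pa / (2 * (r + 1))"
    proof -
      have "t\<^sup>2 * Y = t * (t * Y)" by (simp add: power2_eq_square)
      also have "\<dots> = n * \<Delta>\<^sup>2 * pa / (2 * (r + 1))" unfolding e3 unfolding assms(4) using r1
        by (simp add: field_simps power2_eq_square)
      finally show ?thesis .
    qed
    have e4: "n * \<Delta>\<^sup>2 * pa / (r + 1) = 2 * (n * \<Delta>\<^sup>2 * pa / (2 * (r + 1)))" by (rule half_lemma)
    have e5: "n * \<Delta>\<^sup>2 * pa / (2 * (r + 1)) = pa * \<Delta>\<^sup>2 / (2 * (r + 1)) * n" by simp
    show ?thesis unfolding e1 e2 e4 e5 by simp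
  qed
  ultimately show ?thesis by linarith
qed

theorem mainTheorem2:
  fixes D :: "'a::finite pmf" and S :: "'a option \<Rightarrow> 'a option \<Rightarrow> real"
    and a b :: 'a and \<Delta> \<alpha> :: real
  assumes "a \<noteq> b" and "pmf D a > 0" and "pmf D b > 0"
    and "symmetric_score S"
    and "\<Delta> > 0" and "\<alpha> > 0"
    and "\<forall>\<^sub>F n in sequentially.
           measure_pmf.prob (XY_pmf D n) {(x, y). cond_increment S a b x y \<ge> \<Delta>}
             \<ge> 1 - real n powr (- \<alpha> * ln (real n))"
  shows "\<exists>c C. 0 < c \<and> c \<le> C \<and>
           (\<forall>\<^sub>F n in sequentially.
              c * real n \<le> measure_pmf.variance (XY_pmf D n) (\<lambda>(x, y). opt_score S x y) \<and>
              measure_pmf.variance (XY_pmf D n) (\<lambda>(x, y). opt_score S x y) \<le> C * real n)"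
proof -
  note ab = assms(1) and pa = assms(2) and pb = assms(3) and Dpos = assms(5) and hyp = assms(7)
  define K where "K = (\<Sum>p\<in>(UNIV :: ('a option \<times> 'a option) set). \<bar>S (fst p) (snd p)\<bar>)"
  have K: "\<bar>S u v\<bar> \<le> K" for u v
    unfolding K_def using member_le_sum[of "(u, v)" UNIV "\<lambda>p. \<bar>S (fst p) (snd p)\<bar>"] by simp
  have K0: "K \<ge> 0" using K[of None None] by linarith
  define M where "M = 4 * K"
  have M0: "M \<ge> 0" using K0 by (simp add: M_def)
  define g where "g z = opt_score S (fst z) (snd z)" for z :: "'a list \<times> 'a list"
  have gf: "(\<lambda>(x, y). opt_score S x y) = g" by (auto simp: g_def)
  define r where "r = pmf D a / pmf D b"
  have r0: "r \<ge> 0" using pa pb by (simp add: r_def)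
  define Na where "Na z = real (card (occurrences a (fst z) (snd z)))" for z :: "'a list \<times> 'a list"
  define Nb where "Nb z = real (card (occurrences b (fst z) (snd z)))" for z :: "'a list \<times> 'a list"
  define W where "W z = r * Nb z - Na z" for z
  define Dl where "Dl z = (\<Sum>k\<in>occurrences a (fst z) (snd z). g (replace_at b (fst z) (snd z) k) - g z)" for z
  define ci where "ci z = cond_increment S a b (fst z) (snd z)" for z
  define ind where "ind z = (if \<Delta> \<le> ci z then 1 else (0::real))" for z
  define \<epsilon> where "\<epsilon> = \<Delta> * pmf D a / (2 * (\<Delta> + M))"
  have \<epsilon>0: "\<epsilon> > 0" using Dpos pa M0 by (simp add: \<epsilon>_def)
  define c where "c = pmf D a * \<Delta>\<^sup>2 / (2 * (r + 1))"
  have c0: "c > 0" using pa Dpos r0 by (simp add: c_def)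
  define C where "C = max c (2 * M\<^sup>2)"
  have exch: "EE D n Dl = EE D n (\<lambda>z. W z * h z)" if "h = g" for n h
    unfolding that Dl_def W_def r_def Na_def Nb_def by (rule exch_main[OF ab pb])
  have EW: "EE D n W = 0" for n
  proof -
    have "EE D n (\<lambda>z. W z * 1) = EE D n (\<lambda>z. \<Sum>k\<in>occurrences a (fst z) (snd z). (\<lambda>_. 1::real) (replace_at b (fst z) (snd z) k) - 1)"
      unfolding W_def r_def Na_def Nb_def by (rule exch_main[OF ab pb, symmetric])
    also have "\<dots> = EE D n (\<lambda>z. 0)" by simp
    finally show ?thesis using EE_const[of D n 0] by simp
  qed
  have EW2: "EE D n (\<lambda>z. W z * W z) = (r + 1) * (2 * real n * pmf D a)" for n
  proof -
    have "EE D n (\<lambda>z. W z * W z) = EE D n (\<lambda>z. \<Sum>k\<in>occurrences a (fst z) (snd z). W (replace_at b (fst z) (snd z) k) - W z)"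
      unfolding W_def r_def Na_def Nb_def by (rule exch_main[OF ab pb, symmetric])
    also have "\<dots> = EE D n (\<lambda>z. (r + 1) * Na z)"
    proof (rule EE_cong)
      fix z :: "'a list \<times> 'a list"
      have "W (replace_at b (fst z) (snd z) k) - W z = r + 1" if k: "k \<in> occurrences a (fst z) (snd z)" for k
      proof -
        have "Nb (replace_at b (fst z) (snd z) k) = Nb z + 1"
          unfolding Nb_def occ_replace_b(1)[OF k ab] using occ_replace_b(2)[OF k ab]
          by (simp add: card_insert_disjoint[OF finite_occ])
        moreover have "Na (replace_at b (fst z) (snd z) k) = Na z - 1"
        proof -
          have "card (occurrences a (fst z) (snd z)) \<ge> 1" using k finite_occ
            by (metis One_nat_def Suc_leI card_gt_0_iff empty_iff)
          then show ?thesis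
            unfolding Na_def occ_replace_a[OF k ab] using k finite_occ by (simp add: of_nat_diff)
        qed
        ultimately show ?thesis unfolding W_def by (simp add: algebra_simps)
      qed
      then show "(\<Sum>k\<in>occurrences a (fst z) (snd z). W (replace_at b (fst z) (snd z) k) - W z) = (r + 1) * Na z"
        unfolding Na_def by simp
    qed
    also have "\<dots> = (r + 1) * (2 * real n * pmf D a)"
      by (simp add: EE_cmult Na_def EE_card_occ)
    finally show ?thesis .
  qed
  have EDl: "EE D n Dl \<ge> 2 * real n * \<Delta> * pmf D a - (\<Delta> + M) * (2 * real n) * (1 - EE D n ind)" for n
  proof -
    have "EE D n Dl \<ge> EE D n (\<lambda>z. \<Delta> * Na z - (\<Delta> + M) * (2 * real n) * (1 - ind z))"
    proof (rule EE_mono)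
      fix z :: "'a list \<times> 'a list" assume z: "z \<in> LL n \<times> LL n"
      have len: "length (fst z) = n" "length (snd z) = n" using z by (auto simp: LL_def)
      have Na0: "Na z \<ge> 0" "Na z \<le> 2 * real n" unfolding Na_def using card_occ_le[OF len] by auto
      have DlN: "Dl z = Na z * ci z" unfolding Dl_def Na_def ci_def g_def by (simp add: cond_inc_sum)
      have Dlb: "Dl z \<ge> - M * Na z"
      proof -
        have "(\<Sum>k\<in>occurrences a (fst z) (snd z). - M) \<le> Dl z"
          unfolding Dl_def
        proof (rule sum_mono)
          fix k assume k: "k \<in> occurrences a (fst z) (snd z)"
          have "\<bar>g (replace_at b (fst z) (snd z) k) - g z\<bar> \<le> M"
            using occ_bound[OF k, of b] opt_upd_x[OF K, where x="fst z" and c=b and y="snd z"]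
                  opt_upd_y[OF K, where y="snd z" and c=b and x="fst z"]
            by (cases k) (auto simp: g_def M_def)
          then show "- M \<le> g (replace_at b (fst z) (snd z) k) - g z" by linarith
        qed
        then show ?thesis unfolding Na_def by (simp add: mult.commute)
      qed
      show "\<Delta> * Na z - (\<Delta> + M) * (2 * real n) * (1 - ind z) \<le> Dl z"
      proof (cases "\<Delta> \<le> ci z")
        case True
        then have "\<Delta> * Na z \<le> Dl z" unfolding DlN using Na0 mult_left_mono[OF True Na0(1)] by (simp add: mult.commute)
        then show ?thesis using True by (simp add: ind_def)
      next
        case False
        have "(\<Delta> + M) * Na z \<le> (\<Delta> + M) * (2 * real n)"
          using Na0 Dpos M0 by (intro mult_left_mono) auto
        then show ?thesis using False Dlb by (simp add: ind_def algebra_simps)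
      qed
    qed
    also have "EE D n (\<lambda>z. \<Delta> * Na z - (\<Delta> + M) * (2 * real n) * (1 - ind z))
        = 2 * real n * \<Delta> * pmf D a - (\<Delta> + M) * (2 * real n) * (1 - EE D n ind)"
      by (simp add: EE_diff EE_cmult Na_def EE_card_occ EE_const)
    finally show ?thesis by simp
  qed
  have prob: "measure_pmf.prob (XY_pmf D n) {(x, y). cond_increment S a b x y \<ge> \<Delta>} = EE D n ind" for n
  proof -
    have "measure_pmf.prob (XY_pmf D n) {(x, y). cond_increment S a b x y \<ge> \<Delta>}
        = measure_pmf.expectation (XY_pmf D n) (indicator {(x, y). cond_increment S a b x y \<ge> \<Delta>})"
      by simp
    also have "\<dots> = EE D n ind"
      unfolding exp_XY EE_def[symmetric]
      by (intro EE_cong) (auto simp: ind_def ci_def indicator_def)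
    finally show ?thesis .
  qed
  have upper: "measure_pmf.variance (XY_pmf D n) g \<le> 2 * M\<^sup>2 * real n" for n
  proof -
    have "measure_pmf.variance (XY_pmf D n) g \<le> real (n + n) * M\<^sup>2"
      unfolding var_eq
      by (rule EE_var_upper[OF M0]) (auto simp: g_def M_def intro: opt_upd_x[OF K] opt_upd_y[OF K])
    then show ?thesis by (simp add: mult_ac)
  qed
  have lower: "measure_pmf.variance (XY_pmf D n) g \<ge> c * real n"
    if good: "1 - EE D n ind \<le> \<epsilon>" for n
  proof -
    define m where "m = EE D n g"
    define t where "t = \<Delta> / (2 * (r + 1))"
    have X: "EE D n Dl \<ge> real n * \<Delta> * pmf D a"
    proof -
      have "(\<Delta> + M) * (2 * real n) * (1 - EE D n ind) \<le> (\<Delta> + M) * (2 * real n) * \<epsilon>"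
        using good Dpos M0 by (intro mult_left_mono) auto
      also have "\<dots> = real n * \<Delta> * pmf D a" unfolding \<epsilon>_def using Dpos M0 by (simp add: field_simps)
      finally show ?thesis using EDl[of n] by linarith
    qed
    have WDl: "EE D n (\<lambda>z. W z * (g z - m)) = EE D n Dl"
    proof -
      have "EE D n (\<lambda>z. W z * (g z - m)) = EE D n (\<lambda>z. W z * g z) - m * EE D n W"
        by (simp add: right_diff_distrib EE_diff EE_cmult[symmetric] mult_ac)
      then show ?thesis using EW[of n] exch[of g n] by simp
    qed
    have pt: "2 * t * EE D n Dl \<le> t\<^sup>2 * EE D n (\<lambda>z. W z * W z) + EE D n (\<lambda>z. (g z - m)\<^sup>2)"
    proof -
      have "EE D n (\<lambda>z. 2 * t * (W z * (g z - m))) \<le> EE D n (\<lambda>z. t\<^sup>2 * (W z * W z) + (g z - m)\<^sup>2)"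
      proof (rule EE_mono)
        fix z
        have "0 \<le> (t * W z - (g z - m))\<^sup>2" by simp
        then show "2 * t * (W z * (g z - m)) \<le> t\<^sup>2 * (W z * W z) + (g z - m)\<^sup>2"
          by (simp add: power2_diff power2_eq_square algebra_simps)
      qed
      then show ?thesis using WDl by (simp add: EE_cmult EE_add)
    qed
    have "measure_pmf.variance (XY_pmf D n) g = EE D n (\<lambda>z. (g z - m)\<^sup>2)"
      unfolding var_EE m_def ..
    then show ?thesis
      using final_arith[OF _ X EW2 t_def r0 Dpos _ less_imp_le[OF pa]] pt
      unfolding c_def by (simp add: mult.commute)
  qed
  have ev: "\<forall>\<^sub>F n in sequentially. 1 - EE D n ind \<le> \<epsilon>"
    using eventually_conj[OF hyp powr_small[OF assms(6) \<epsilon>0]]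
    by (rule eventually_mono) (simp add: prob)
  show ?thesis
  proof (intro exI conjI)
    show "0 < c" by (rule c0)
    show "c \<le> C" by (simp add: C_def)
    show "\<forall>\<^sub>F n in sequentially.
            c * real n \<le> measure_pmf.variance (XY_pmf D n) (\<lambda>(x, y). opt_score S x y) \<and>
            measure_pmf.variance (XY_pmf D n) (\<lambda>(x, y). opt_score S x y) \<le> C * real n"
    proof (rule eventually_mono[OF ev])
      fix n assume "1 - EE D n ind \<le> \<epsilon>"
      then have l: "c * real n \<le> measure_pmf.variance (XY_pmf D n) g" by (rule lower)
      have "measure_pmf.variance (XY_pmf D n) g \<le> C * real n"
      proof -
        have "2 * M\<^sup>2 * real n \<le> C * real n" by (intro mult_right_mono) (auto simp: C_def)
        then show ?thesis using upper[of n] by linarith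
      qed
      then show "c * real n \<le> measure_pmf.variance (XY_pmf D n) (\<lambda>(x, y). opt_score S x y) \<and>
            measure_pmf.variance (XY_pmf D n) (\<lambda>(x, y). opt_score S x y) \<le> C * real n"
        using l unfolding gf by simp
    qed
  qed
qed


end
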